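(* Let $K$ be a finite field of characteristic $p$ and let $T$ be a finite $p$-group. Then the one-dimensional ideal $K\sum_{t\in T}t$ of $KT$ is checkable if and only if $T$ is cyclic.
   Context: A right ideal $I\le KT$ is called checkable if there is $v\in KT$ with $I=\{a\in KT: va=0\}$. *)

theory Defs
  imports "HOL-Algebra.Elementary_Groups" "HOL-Computational_Algebra.Primes"
begin

text \<open>Group algebra KT of a finite group G (HOL-Algebra structure) over a field 'k.
 Elements are functions carrier G \<rightarrow> 'k, extended by 0 outside the carrier.\<close>

definition group_algebra :: "('g, 'b) monoid_scheme \<Rightarrow> ('g \<Rightarrow> 'k::field) set" where
  "group_algebra G = {a. \<forall>x. x \<notin> carrier G \<longrightarrow> a x = 0}"

definition ga_mult :: "('g, 'b) monoid_scheme \<Rightarrow> ('g \<Rightarrow> 'k::field) \<Rightarrow> ('g \<Rightarrow> 'k) \<Rightarrow> ('g \<Rightarrow> 'k)" where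
  "ga_mult G a b = (\<lambda>x. if x \<in> carrier G
      then (\<Sum>y\<in>carrier G. a y * b (inv\<^bsub>G\<^esub> y \<otimes>\<^bsub>G\<^esub> x)) else 0)"

definition checkable :: "('g, 'b) monoid_scheme \<Rightarrow> ('g \<Rightarrow> 'k::field) set \<Rightarrow> bool" where
  "checkable G I \<longleftrightarrow> (\<exists>v \<in> group_algebra G. I = {a \<in> group_algebra G. ga_mult G v a = (\<lambda>_. 0)})"

definition ga_sum_elem :: "('g, 'b) monoid_scheme \<Rightarrow> ('g \<Rightarrow> 'k::field)" where
  "ga_sum_elem G = (\<lambda>x. if x \<in> carrier G then 1 else 0)"

end

theory Submission
  imports Defs "HOL-Algebra.Group_Action" "HOL-Algebra.Multiplicative_Group"
begin


lemma (in group) sub_card_ppow: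
  assumes fin: "finite (carrier G)" and p: "prime p" and cG: "card (carrier G) = p^n"
    and H: "subgroup H G"
  shows "\<exists>i\<le>n. card H = p^i"
proof -
  have "card (rcosets H) * card H = order G" using lagrange[OF H] .
  hence "card H dvd p^n" using cG unfolding order_def by (metis dvd_triv_right)
  thus ?thesis using divides_primepow_nat[OF p] by auto
qed

lemma (in group) rcosets_ppow:
  assumes fin: "finite (carrier G)" and p: "prime p" and cG: "card (carrier G) = p^n"
    and H: "subgroup H G"
  shows "\<exists>i\<le>n. card (rcosets H) = p^i"
proof -
  have "card (rcosets H) * card H = order G" using lagrange[OF H] .
  hence "card (rcosets H) dvd p^n" using cG unfolding order_def by (metis dvd_triv_left)
  thus ?thesis using divides_primepow_nat[OF p] by auto
qed

lemma (in group) rcosets_obtain: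
  assumes "C \<in> rcosets M"
  obtains x where "x \<in> carrier G" "C = M #> x"
proof -
  have "\<exists>x. x \<in> carrier G \<and> C = M #> x" using assms unfolding RCOSETS_def by blast
  thus ?thesis using that by blast
qed

lemma (in group) coset_action:
  assumes M: "subgroup M G"
  shows "group_action (G\<lparr>carrier := M\<rparr>) (rcosets M) (\<lambda>m. \<lambda>C\<in>rcosets M. C #> inv m)"
proof -
  let ?E = "rcosets M"
  let ?\<phi> = "\<lambda>m. \<lambda>C\<in>rcosets M. C #> inv m"
  have Msub: "M \<subseteq> carrier G" using M subgroup.subset by blast
  have closed: "C #> g \<in> ?E" if Cin: "C \<in> ?E" and gin: "g \<in> carrier G" for C g
  proof -
    obtain x where x: "x \<in> carrier G" "C = M #> x" using Cin by (rule rcosets_obtain)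
    have "C #> g = M #> (x \<otimes> g)" using x gin Msub by (simp add: coset_mult_assoc)
    thus ?thesis using x gin Msub rcosetsI by simp
  qed
  have backc: "(C #> g) #> inv g = C" if Cin: "C \<in> ?E" and gin: "g \<in> carrier G" for C g
  proof -
    obtain x where x: "x \<in> carrier G" "C = M #> x" using Cin by (rule rcosets_obtain)
    thus ?thesis using gin Msub by (simp add: coset_mult_assoc m_assoc)
  qed
  have inBij: "?\<phi> m \<in> Bij ?E" if m: "m \<in> M" for m
  proof -
    have mc: "m \<in> carrier G" using m Msub by auto
    have "bij_betw (?\<phi> m) ?E ?E"
    proof (rule bij_betwI[where g = "?\<phi> (inv m)"])
      show "?\<phi> m \<in> ?E \<rightarrow> ?E" using closed mc by auto
      show "?\<phi> (inv m) \<in> ?E \<rightarrow> ?E" using closed mc by auto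
      show "?\<phi> (inv m) (?\<phi> m C) = C" if "C \<in> ?E" for C
        using that closed[OF that, of "inv m"] backc[OF that, of "inv m"] mc by simp
      show "?\<phi> m (?\<phi> (inv m) C) = C" if "C \<in> ?E" for C
        using that closed[OF that, of "m"] backc[OF that, of "m"] mc by simp
    qed
    thus ?thesis unfolding Bij_def by auto
  qed
  show ?thesis
    unfolding group_action_def group_hom_def group_hom_axioms_def
  proof (intro conjI)
    show "group (G\<lparr>carrier := M\<rparr>)" using subgroup_imp_group[OF M] .
    show "group (BijGroup ?E)" by (rule group_BijGroup)
    show "?\<phi> \<in> hom (G\<lparr>carrier := M\<rparr>) (BijGroup ?E)"
    proof (rule homI)
      show "?\<phi> m \<in> carrier (BijGroup ?E)" if "m \<in> carrier (G\<lparr>carrier := M\<rparr>)" for m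
        using inBij that by (simp add: BijGroup_def)
      show "?\<phi> (m1 \<otimes>\<^bsub>G\<lparr>carrier := M\<rparr>\<^esub> m2) = ?\<phi> m1 \<otimes>\<^bsub>BijGroup ?E\<^esub> ?\<phi> m2"
        if "m1 \<in> carrier (G\<lparr>carrier := M\<rparr>)" "m2 \<in> carrier (G\<lparr>carrier := M\<rparr>)" for m1 m2
      proof -
        have m: "m1 \<in> M" "m2 \<in> M" using that by auto
        hence mc: "m1 \<in> carrier G" "m2 \<in> carrier G" using Msub by auto
        have "?\<phi> (m1 \<otimes> m2) = compose ?E (?\<phi> m1) (?\<phi> m2)"
        proof (rule ext)
          fix C show "?\<phi> (m1 \<otimes> m2) C = compose ?E (?\<phi> m1) (?\<phi> m2) C"
          proof (cases "C \<in> ?E")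
            case True
            obtain x where x: "x \<in> carrier G" "C = M #> x" using True by (rule rcosets_obtain)
            have "C #> inv (m1 \<otimes> m2) = (C #> inv m2) #> inv m1"
              using x mc Msub by (simp add: coset_mult_assoc inv_mult_group m_assoc)
            thus ?thesis using True closed[OF True, of "inv m2"] mc by (simp add: compose_def)
          qed (simp add: compose_def)
        qed
        thus ?thesis using inBij m by (simp add: BijGroup_def)
      qed
    qed
  qed
qed

lemma (in group) pgroup_fixed_coset:
  assumes fin: "finite (carrier G)" and p: "prime p" and cG: "card (carrier G) = p^n"
    and M: "subgroup M G" and Mne: "M \<noteq> carrier G"
  shows "\<exists>x\<in>carrier G. x \<notin> M \<and> (\<forall>m\<in>M. x \<otimes> m \<otimes> inv x \<in> M)"
proof (rule ccontr)
  assume nf: "\<not> ?thesis"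
  let ?E = "rcosets M"
  let ?G0 = "G\<lparr>carrier := M\<rparr>"
  let ?\<phi> = "\<lambda>m. \<lambda>C\<in>rcosets M. C #> inv m"
  interpret A: group_action ?G0 ?E ?\<phi> using coset_action[OF M] .
  have Msub: "M \<subseteq> carrier G" using M subgroup.subset by blast
  have finE: "finite ?E" using fin by (simp add: RCOSETS_def)
  have fixedM: "C = M" if C: "C \<in> ?E" and fx: "\<forall>m\<in>M. ?\<phi> m C = C" for C
  proof -
    obtain x where x: "x \<in> carrier G" "C = M #> x" using C by (rule rcosets_obtain)
    have conj: "x \<otimes> m' \<otimes> inv x \<in> M" if m': "m' \<in> M" for m'
    proof -
      let ?m = "inv m'"
      have mM: "?m \<in> M" using subgroup.m_inv_closed[OF M m'] by simp
      have mc: "?m \<in> carrier G" using mM Msub by auto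
      have m'c: "m' \<in> carrier G" using m' Msub by auto
      have "C #> inv ?m = C" using fx[rule_format, OF mM] C by simp
      hence eq: "M #> (x \<otimes> m') = M #> x" using x m'c Msub by (simp add: coset_mult_assoc)
      have "x \<otimes> m' \<in> M #> (x \<otimes> m')" using rcos_self[OF _ M] x m'c by simp
      hence "x \<otimes> m' \<in> M #> x" using eq by simp
      then obtain h where h: "h \<in> M" "x \<otimes> m' = h \<otimes> x" unfolding r_coset_def by auto
      have hc: "h \<in> carrier G" using h Msub by auto
      have "x \<otimes> m' \<otimes> inv x = h" using h x hc m'c by (simp add: m_assoc)
      thus ?thesis using h by simp
    qed
    have "x \<in> M" using nf x conj by blast
    thus ?thesis using x coset_join2[OF _ M] by auto
  qed
  have Mfix: "?\<phi> m M = M" if "m \<in> M" for m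
  proof -
    have "M \<in> ?E" using rcosetsI[OF Msub one_closed] Msub by (simp add: coset_mult_one)
    moreover have "inv m \<in> M" using subgroup.m_inv_closed[OF M that] by simp
    ultimately show ?thesis using coset_join2[OF _ M] Msub by auto
  qed
  have MinE: "M \<in> ?E" using rcosetsI[OF Msub one_closed] Msub by (simp add: coset_mult_one)
  have orbM: "orbit ?G0 ?\<phi> M = {M}"
    unfolding orbit_def using Mfix M subgroup.one_closed by fastforce
  have orbMin: "{M} \<in> orbits ?G0 ?E ?\<phi>" unfolding orbits_def using orbM MinE by blast
  have dvdO: "p dvd card Ob" if Ob: "Ob \<in> orbits ?G0 ?E ?\<phi>" "Ob \<noteq> {M}" for Ob
  proof -
    obtain C where C: "C \<in> ?E" "Ob = orbit ?G0 ?\<phi> C" using Ob unfolding orbits_def by blast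
    have "card Ob * card (stabilizer ?G0 ?\<phi> C) = order ?G0" using A.orbit_stabilizer_theorem C by simp
    hence eqM: "card M = card Ob * card (stabilizer ?G0 ?\<phi> C)" by (simp add: order_def)
    obtain i where i: "card M = p^i" using sub_card_ppow[OF fin p cG M] by blast
    have "card Ob dvd p^i" using dvdI[OF eqM] i by simp
    then obtain j where j: "card Ob = p^j" using divides_primepow_nat[OF p] by blast
    show ?thesis
    proof (cases j)
      case 0
      hence c1: "card Ob = 1" using j by simp
      have "C \<in> Ob" using C A.orbit_refl by simp
      hence Oeq: "Ob = {C}" using c1 by (metis card_1_singletonE singletonD)
      have "\<forall>m\<in>M. ?\<phi> m C = C"
      proof
        fix m assume "m \<in> M"
        hence "?\<phi> m C \<in> Ob" using C unfolding orbit_def by force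
        thus "?\<phi> m C = C" using Oeq by simp
      qed
      hence "C = M" using fixedM C by blast
      thus ?thesis using Oeq Ob by simp
    next
      case (Suc k) thus ?thesis using j by simp
    qed
  qed
  have "(\<Sum>Ob\<in>orbits ?G0 ?E ?\<phi>. \<Sum>x\<in>Ob. (1::nat)) = (\<Sum>x\<in>?E. 1)" using A.disjoint_sum[OF finE] .
  hence cardE: "card ?E = (\<Sum>Ob\<in>orbits ?G0 ?E ?\<phi>. card Ob)" by simp
  have finO: "finite (orbits ?G0 ?E ?\<phi>)" using finE unfolding orbits_def by simp
  have cE: "card ?E = card {M} + (\<Sum>Ob\<in>orbits ?G0 ?E ?\<phi> - {{M}}. card Ob)"
    using cardE sum.remove[OF finO orbMin, of card] by simp
  have dS: "p dvd (\<Sum>Ob\<in>orbits ?G0 ?E ?\<phi> - {{M}}. card Ob)"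
    by (rule dvd_sum) (use dvdO in auto)
  have dE: "p dvd card ?E"
  proof -
    obtain k where k: "card ?E = p^k" using rcosets_ppow[OF fin p cG M] by blast
    have "k \<noteq> 0"
    proof
      assume "k = 0"
      hence "card M = card (carrier G)" using lagrange[OF M] k unfolding order_def by simp
      hence "M = carrier G" using card_subset_eq[OF fin Msub] by simp
      thus False using Mne by simp
    qed
    thus ?thesis using k by simp
  qed
  have "p dvd (\<Sum>Ob\<in>orbits ?G0 ?E ?\<phi> - {{M}}. card Ob) + 1" using dE cE by simp
  hence "p dvd 1" using dvd_add_right_iff[OF dS, of 1] by blast
  thus False using p by simp
qed




lemma (in comm_group) commutator_one:
  assumes a: "a \<in> carrier G" and b: "b \<in> carrier G"
  shows "a \<otimes> b \<otimes> inv a \<otimes> inv b = \<one>"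
proof -
  have "a \<otimes> b \<otimes> inv a \<otimes> inv b = a \<otimes> (b \<otimes> (inv a \<otimes> inv b))"
    using a b by (simp add: m_assoc)
  also have "b \<otimes> (inv a \<otimes> inv b) = inv a \<otimes> (b \<otimes> inv b)"
    using a b m_lcomm[of b "inv a" "inv b"] by simp
  also have "\<dots> = inv a" using a b by simp
  finally show ?thesis using a by simp
qed

lemma (in group) pgroup_max:
  assumes fin: "finite (carrier G)" and p: "prime p" and cG: "card (carrier G) = p^n"
    and H: "subgroup H G" and Hne: "H \<noteq> carrier G"
  shows "\<exists>M. subgroup M G \<and> H \<subseteq> M \<and> M \<noteq> carrier G \<and>
     (\<forall>s\<in>carrier G. \<forall>t\<in>carrier G. s \<otimes> t \<otimes> inv s \<otimes> inv t \<in> M) \<and> (\<forall>t\<in>carrier G. t [^] p \<in> M)"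
proof -
  let ?P = "\<lambda>M. subgroup M G \<and> H \<subseteq> M \<and> M \<noteq> carrier G"
  have bnd: "\<forall>S. ?P S \<longrightarrow> card S < Suc (card (carrier G))"
  proof (intro allI impI)
    fix S assume "?P S"
    hence "S \<subseteq> carrier G" using subgroup.subset[of S G] by simp
    thus "card S < Suc (card (carrier G))" using card_mono[OF fin] by (simp add: less_Suc_eq_le)
  qed
  obtain M where PM: "?P M" and maxM: "\<forall>S. ?P S \<longrightarrow> card S \<le> card M"
    using ex_has_greatest_nat[of ?P H card "Suc (card (carrier G))"] H Hne bnd by blast
  have M: "subgroup M G" using PM by blast
  have Msub: "M \<subseteq> carrier G" using subgroup.subset[OF M] .
  have Mne: "M \<noteq> carrier G" using PM by blast
  have maxS: "S = M \<or> S = carrier G" if S: "subgroup S G" "M \<subseteq> S" for S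
  proof (cases "S = carrier G")
    case False
    hence "card S \<le> card M" using maxM S PM by blast
    moreover have "finite S" using subgroup.subset[OF S(1)] fin finite_subset by blast
    ultimately show ?thesis using card_seteq S(2) by blast
  qed simp
  define Nz where "Nz = {g \<in> carrier G. \<forall>m\<in>M. g \<otimes> m \<otimes> inv g \<in> M \<and> inv g \<otimes> m \<otimes> g \<in> M}"
  have Nz: "subgroup Nz G"
  proof (rule subgroupI)
    show "Nz \<subseteq> carrier G" unfolding Nz_def by blast
    have "\<one> \<in> Nz" unfolding Nz_def using Msub by auto
    thus "Nz \<noteq> {}" by blast
    show "inv a \<in> Nz" if a: "a \<in> Nz" for a
      using a unfolding Nz_def by auto
    show "a \<otimes> b \<in> Nz" if a: "a \<in> Nz" and b: "b \<in> Nz" for a b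
    proof -
      have ac: "a \<in> carrier G" and bc: "b \<in> carrier G" using a b unfolding Nz_def by auto
      have "a \<otimes> b \<otimes> m \<otimes> inv (a \<otimes> b) \<in> M \<and> inv (a \<otimes> b) \<otimes> m \<otimes> (a \<otimes> b) \<in> M" if m: "m \<in> M" for m
      proof -
        have mc: "m \<in> carrier G" using m Msub by auto
        have e1: "a \<otimes> b \<otimes> m \<otimes> inv (a \<otimes> b) = a \<otimes> (b \<otimes> m \<otimes> inv b) \<otimes> inv a"
          using ac bc mc by (simp add: m_assoc inv_mult_group)
        have e2: "inv (a \<otimes> b) \<otimes> m \<otimes> (a \<otimes> b) = inv b \<otimes> (inv a \<otimes> m \<otimes> a) \<otimes> b"
          using ac bc mc by (simp add: m_assoc inv_mult_group)
        have "b \<otimes> m \<otimes> inv b \<in> M" "inv a \<otimes> m \<otimes> a \<in> M" using b a m unfolding Nz_def by auto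
        thus ?thesis using e1 e2 a b unfolding Nz_def by auto
      qed
      thus ?thesis using ac bc unfolding Nz_def by auto
    qed
  qed
  have MNz: "M \<subseteq> Nz"
  proof
    fix x assume x: "x \<in> M"
    have "\<forall>m\<in>M. x \<otimes> m \<otimes> inv x \<in> M \<and> inv x \<otimes> m \<otimes> x \<in> M"
      using x subgroup.m_closed[OF M] subgroup.m_inv_closed[OF M] by simp
    thus "x \<in> Nz" using x Msub unfolding Nz_def by auto
  qed
  obtain x where x: "x \<in> carrier G" "x \<notin> M" and xc: "\<forall>m\<in>M. x \<otimes> m \<otimes> inv x \<in> M"
    using pgroup_fixed_coset[OF fin p cG M Mne] by blast
  have "(\<lambda>m. x \<otimes> m \<otimes> inv x) ` M = M"
  proof (rule endo_inj_surj)
    show "finite M" using Msub fin finite_subset by blast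
    show "(\<lambda>m. x \<otimes> m \<otimes> inv x) ` M \<subseteq> M" using xc by auto
    show "inj_on (\<lambda>m. x \<otimes> m \<otimes> inv x) M"
    proof (rule inj_onI)
      fix a b assume a: "a \<in> M" and b: "b \<in> M" and e: "x \<otimes> a \<otimes> inv x = x \<otimes> b \<otimes> inv x"
      have ac: "a \<in> carrier G" and bc: "b \<in> carrier G" using a b Msub by auto
      have "x \<otimes> a = x \<otimes> b" using e x(1) ac bc by simp
      thus "a = b" using x(1) ac bc by simp
    qed
  qed
  hence xc2: "inv x \<otimes> m \<otimes> x \<in> M" if "m \<in> M" for m
  proof -
    obtain m' where m': "m' \<in> M" "m = x \<otimes> m' \<otimes> inv x" using \<open>m \<in> M\<close> \<open>_ = M\<close> by blast
    have m'c: "m' \<in> carrier G" using m' Msub by auto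
    have "inv x \<otimes> m \<otimes> x = m'" using m' x(1) m'c by (simp add: m_assoc) (metis l_inv l_one m_assoc inv_closed)
    thus ?thesis using m' by simp
  qed
  have "x \<in> Nz" unfolding Nz_def using x xc xc2 by auto
  hence "Nz \<noteq> M" using x by blast
  hence NzG: "Nz = carrier G" using maxS[OF Nz MNz] by blast
  have normM: "M \<lhd> G"
  proof (rule normal_invI[OF M])
    fix g h assume "g \<in> carrier G" "h \<in> M"
    thus "g \<otimes> h \<otimes> inv g \<in> M" using NzG unfolding Nz_def by auto
  qed
  interpret N: normal M G by (rule normM)
  let ?Q = "G Mod M"
  have Q: "group ?Q" by (rule N.factorgroup_is_group)
  interpret Qg: group ?Q by (rule Q)
  have oneQ: "\<one>\<^bsub>?Q\<^esub> = M" by simp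
  have carrQ: "carrier ?Q = rcosets M" by (simp add: FactGroup_def)
  have cosI: "M #> x \<in> carrier ?Q" if "x \<in> carrier G" for x
    using carrQ rcosetsI[OF Msub that] by simp
  have cosM: "x \<in> M" if "x \<in> carrier G" "M #> x = M" for x
    using rcos_self[OF that(1) M] that(2) by simp
  have subQ: "(\<forall>x\<in>carrier G. M #> x \<in> A) \<or> (\<forall>x\<in>carrier G. M #> x \<in> A \<longrightarrow> x \<in> M)"
    if A: "subgroup A ?Q" for A
  proof -
    have U: "subgroup (\<Union>A) G" by (rule N.factgroup_subgroup_union_subgroup[OF A])
    have Uc: "\<Union>A = {x \<in> carrier G. M #> x \<in> A}" by (rule N.factgroup_subgroup_union_char[OF A])
    have "M \<in> A" using subgroup.one_closed[OF A] by simp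
    have "M \<subseteq> \<Union>A"
    proof
      fix m assume m: "m \<in> M"
      hence "M #> m = M" using coset_join2[OF _ M m] Msub by auto
      thus "m \<in> \<Union>A" using Uc \<open>M \<in> A\<close> m Msub by auto
    qed
    hence "\<Union>A = M \<or> \<Union>A = carrier G" using maxS[OF U] by blast
    thus ?thesis using Uc by auto
  qed
  obtain g where g: "g \<in> carrier G" "g \<notin> M" using Msub Mne by blast
  define c where "c = M #> g"
  have cQ: "c \<in> carrier ?Q" using cosI[OF g(1)] c_def by simp
  have genc: "\<exists>i::int. M #> x = c [^]\<^bsub>?Q\<^esub> i" if x: "x \<in> carrier G" for x
  proof -
    let ?A = "carrier (subgroup_generated ?Q {c})"
    have A: "subgroup ?A ?Q" by (rule Qg.subgroup_subgroup_generated)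
    have Ar: "?A = range (\<lambda>i::int. c [^]\<^bsub>?Q\<^esub> i)" by (rule Qg.carrier_subgroup_generated_by_singleton[OF cQ])
    have "c \<in> ?A" using Ar cQ by (metis Qg.int_pow_1 rangeI)
    hence "\<forall>x\<in>carrier G. M #> x \<in> ?A" using subQ[OF A] g c_def by blast
    thus ?thesis using x Ar by blast
  qed
  have cp: "c [^]\<^bsub>?Q\<^esub> p = \<one>\<^bsub>?Q\<^esub>"
  proof -
    define d where "d = c [^]\<^bsub>?Q\<^esub> p"
    have dQ: "d \<in> carrier ?Q" using cQ d_def by simp
    have dg: "d = M #> (g [^] p)" using N.FactGroup_pow[OF g(1), of p] c_def d_def by (simp add: r_coset_def)
    let ?A = "carrier (subgroup_generated ?Q {d})"
    have A: "subgroup ?A ?Q" by (rule Qg.subgroup_subgroup_generated)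
    have Ar: "?A = range (\<lambda>i::int. d [^]\<^bsub>?Q\<^esub> i)" by (rule Qg.carrier_subgroup_generated_by_singleton[OF dQ])
    have dA: "d \<in> ?A" using Ar dQ by (metis Qg.int_pow_1 rangeI)
    show ?thesis
    proof (cases "\<forall>x\<in>carrier G. M #> x \<in> ?A")
      case True
      hence "c \<in> ?A" using g c_def by blast
      then obtain j :: int where j: "c = d [^]\<^bsub>?Q\<^esub> j" using Ar by blast
      have "d [^]\<^bsub>?Q\<^esub> j = c [^]\<^bsub>?Q\<^esub> (int p * j)"
        using d_def cQ by (simp add: Qg.int_pow_pow flip: int_pow_int)
      hence "c [^]\<^bsub>?Q\<^esub> (1::int) = c [^]\<^bsub>?Q\<^esub> (int p * j)" using j cQ by simp
      hence d1: "int (group.ord ?Q c) dvd (int p * j - 1)" using Qg.int_pow_eq[OF cQ] by blast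
      have "group.ord ?Q c dvd order ?Q" by (rule Qg.ord_dvd_group_order[OF cQ])
      moreover have "order ?Q dvd p^n"
        using lagrange[OF M] cG carrQ unfolding order_def by (metis dvd_triv_left)
      ultimately have "group.ord ?Q c dvd p^n" by (rule dvd_trans)
      then obtain k where k: "group.ord ?Q c = p^k" using divides_primepow_nat[OF p] by blast
      show ?thesis
      proof (cases k)
        case 0
        hence "c = \<one>\<^bsub>?Q\<^esub>" using k Qg.ord_eq_1[OF cQ] by simp
        hence "g \<in> M" using cosM[OF g(1)] c_def by simp
        thus ?thesis using g by simp
      next
        case (Suc k')
        hence "int p dvd int (group.ord ?Q c)" using k by simp
        hence e1: "int p dvd (int p * j - 1)" using d1 dvd_trans by blast
        have e2: "int p dvd int p * j" by simp
        have "int p dvd (int p * j) - (int p * j - 1)" using dvd_diff[OF e2 e1] .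
        hence "int p dvd 1" by simp
        hence False using p by (simp add: prime_gt_1_nat)
        thus ?thesis ..
      qed
    next
      case False
      hence "\<forall>x\<in>carrier G. M #> x \<in> ?A \<longrightarrow> x \<in> M" using subQ[OF A] by blast
      hence "g [^] p \<in> M" using dA dg g by simp
      hence "d = M" using dg coset_join2[OF _ M] g by simp
      thus ?thesis using d_def by simp
    qed
  qed
  have ppow: "t [^] p \<in> M" if t: "t \<in> carrier G" for t
  proof -
    obtain i :: int where i: "M #> t = c [^]\<^bsub>?Q\<^esub> i" using genc[OF t] by blast
    have "M #> (t [^] p) = (M #> t) [^]\<^bsub>?Q\<^esub> p" using N.FactGroup_pow[OF t, of p] by (simp add: r_coset_def)
    also have "\<dots> = (c [^]\<^bsub>?Q\<^esub> i) [^]\<^bsub>?Q\<^esub> (int p)" using i by (simp add: int_pow_int)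
    also have "\<dots> = (c [^]\<^bsub>?Q\<^esub> (int p)) [^]\<^bsub>?Q\<^esub> i" using cQ by (simp add: Qg.int_pow_pow mult.commute)
    also have "\<dots> = \<one>\<^bsub>?Q\<^esub>" using cp Qg.int_pow_one[of i] by (simp add: int_pow_int del: one_FactGroup)
    finally show ?thesis using cosM t by simp
  qed
  have cyc: "cyclic_group ?Q"
    unfolding Qg.cyclic_group
  proof (intro bexI[OF _ cQ] equalityI subsetI)
    fix y assume "y \<in> carrier ?Q"
    then obtain x where x: "x \<in> carrier G" "y = M #> x" using carrQ by (metis rcosets_obtain)
    thus "y \<in> range (\<lambda>i::int. c [^]\<^bsub>?Q\<^esub> i)" using genc by blast
  next
    fix y assume "y \<in> range (\<lambda>i::int. c [^]\<^bsub>?Q\<^esub> i)"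
    thus "y \<in> carrier ?Q" using cQ by auto
  qed
  have cQc: "comm_group ?Q" by (rule Qg.cyclic_imp_abelian_group[OF cyc])
  interpret Qc: comm_group ?Q by (rule cQc)
  interpret h: group_hom G ?Q "\<lambda>a. M #> a"
    unfolding group_hom_def group_hom_axioms_def using Q N.r_coset_hom_Mod is_group by blast
  have comm: "s \<otimes> t \<otimes> inv s \<otimes> inv t \<in> M" if s: "s \<in> carrier G" and t: "t \<in> carrier G" for s t
  proof -
    have "M #> (s \<otimes> t \<otimes> inv s \<otimes> inv t) = (M #> s) \<otimes>\<^bsub>?Q\<^esub> (M #> t) \<otimes>\<^bsub>?Q\<^esub> inv\<^bsub>?Q\<^esub> (M #> s) \<otimes>\<^bsub>?Q\<^esub> inv\<^bsub>?Q\<^esub> (M #> t)"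
      using s t by (simp add: h.hom_mult h.hom_inv del: mult_FactGroup)
    also have "\<dots> = \<one>\<^bsub>?Q\<^esub>"
      using s t cosI Qc.commutator_one by blast
    finally show ?thesis using cosM s t by simp
  qed
  show ?thesis using M PM Mne comm ppow by blast
qed



lemma (in group) pgroup_noncyclic_sub:
  assumes fin: "finite (carrier G)" and p: "prime p" and cG: "card (carrier G) = p^n"
    and nc: "\<not> cyclic_group G"
  shows "\<exists>N. subgroup N G \<and> (\<forall>s\<in>carrier G. \<forall>t\<in>carrier G. s \<otimes> t \<otimes> inv s \<otimes> inv t \<in> N)
     \<and> (\<forall>t\<in>carrier G. t [^] p \<in> N) \<and> p < card (rcosets N)"
proof -
  have p1: "p > 1" using p prime_gt_1_nat by blast
  have ntriv: "{\<one>} \<noteq> carrier G"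
  proof
    assume e: "{\<one>} = carrier G"
    have "cyclic_group G" unfolding cyclic_group
      by (rule bexI[of _ \<one>]) (use e in auto)
    thus False using nc by simp
  qed
  obtain M1 where M1: "subgroup M1 G" "{\<one>} \<subseteq> M1" "M1 \<noteq> carrier G"
     "\<forall>s\<in>carrier G. \<forall>t\<in>carrier G. s \<otimes> t \<otimes> inv s \<otimes> inv t \<in> M1" "\<forall>t\<in>carrier G. t [^] p \<in> M1"
    using pgroup_max[OF fin p cG triv_subgroup ntriv] by blast
  have M1sub: "M1 \<subseteq> carrier G" using subgroup.subset[OF M1(1)] .
  obtain g where g: "g \<in> carrier G" "g \<notin> M1" using M1sub M1(3) by blast
  let ?H = "carrier (subgroup_generated G {g})"
  have H: "subgroup ?H G" by (rule subgroup_subgroup_generated)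
  have Hr: "?H = range (\<lambda>i::int. g [^] i)" by (rule carrier_subgroup_generated_by_singleton[OF g(1)])
  have gH: "g \<in> ?H" using Hr by (metis int_pow_1[OF g(1)] rangeI)
  have Hne: "?H \<noteq> carrier G"
  proof
    assume "?H = carrier G"
    hence "cyclic_group G" unfolding cyclic_group using Hr g(1) by blast
    thus False using nc by simp
  qed
  obtain M2 where M2: "subgroup M2 G" "?H \<subseteq> M2" "M2 \<noteq> carrier G"
     "\<forall>s\<in>carrier G. \<forall>t\<in>carrier G. s \<otimes> t \<otimes> inv s \<otimes> inv t \<in> M2" "\<forall>t\<in>carrier G. t [^] p \<in> M2"
    using pgroup_max[OF fin p cG H Hne] by blast
  have M2sub: "M2 \<subseteq> carrier G" using subgroup.subset[OF M2(1)] .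
  let ?N = "M1 \<inter> M2"
  have N: "subgroup ?N G" by (rule subgroups_Inter_pair[OF M1(1) M2(1)])
  have gM2: "g \<in> M2" using gH M2(2) by blast
  obtain a where a: "card ?N = p^a" using sub_card_ppow[OF fin p cG N] by blast
  obtain b where b: "card M2 = p^b" using sub_card_ppow[OF fin p cG M2(1)] by blast
  have finM2: "finite M2" using M2sub fin finite_subset by blast
  have "card ?N < card M2"
    by (rule psubset_card_mono[OF finM2]) (use g gM2 in blast)
  hence ab: "a < b" using a b p1 by simp
  have "card M2 < card (carrier G)"
    by (rule psubset_card_mono[OF fin]) (use M2sub M2(3) in blast)
  hence bn: "b < n" using b cG p1 by simp
  obtain k where k: "card (rcosets ?N) = p^k" using rcosets_ppow[OF fin p cG N] by blast
  have "p^k * p^a = p^n" using lagrange[OF N] k a cG unfolding order_def by simp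
  hence "p^(k + a) = p^n" by (simp add: power_add)
  hence "k + a = n" using p1 by (simp add: power_inject_exp)
  hence k2: "k \<ge> 2" using ab bn by simp
  have "p < p^2" using p1 by (simp add: power2_eq_square)
  also have "p^2 \<le> p^k" using k2 p1 by (simp add: power_increasing)
  finally have "p < card (rcosets ?N)" using k by simp
  thus ?thesis using N M1(4,5) M2(4,5) by blast
qed



definition linop :: "(('a \<Rightarrow> 'k::field) \<Rightarrow> ('a \<Rightarrow> 'k)) \<Rightarrow> bool" where
  "linop X \<longleftrightarrow> (\<forall>a b. X (\<lambda>x. a x + b x) = (\<lambda>x. X a x + X b x)) \<and> (\<forall>c a. X (\<lambda>x. c * a x) = (\<lambda>x. c * X a x))"

lemma linop_add: "linop X \<Longrightarrow> X (\<lambda>x. a x + b x) = (\<lambda>x. X a x + X b x)"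
  unfolding linop_def by blast

lemma linop_smult: "linop X \<Longrightarrow> X (\<lambda>x. c * a x) = (\<lambda>x. c * X a x)"
  unfolding linop_def by blast

lemma linop_zero: assumes "linop X" shows "X (\<lambda>x. 0) = (\<lambda>x. 0)"
proof -
  have "X (\<lambda>x. 0 * (\<lambda>x. 0) x) = (\<lambda>x. 0 * X (\<lambda>x. 0) x)" by (rule linop_smult[OF assms])
  thus ?thesis by simp
qed

lemma linop_sum:
  assumes X: "linop X" and fin: "finite A"
  shows "X (\<lambda>x. \<Sum>k\<in>A. c k * f k x) = (\<lambda>x. \<Sum>k\<in>A. c k * X (f k) x)"
  using fin
proof (induction A rule: finite_induct)
  case empty thus ?case using linop_zero[OF X] by simp
next
  case (insert k A)
  have "X (\<lambda>x. \<Sum>k\<in>insert k A. c k * f k x) = X (\<lambda>x. c k * f k x + (\<Sum>k\<in>A. c k * f k x))"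
    using insert by simp
  also have "\<dots> = (\<lambda>x. X (\<lambda>x. c k * f k x) x + X (\<lambda>x. \<Sum>k\<in>A. c k * f k x) x)"
    by (rule linop_add[OF X])
  also have "\<dots> = (\<lambda>x. c k * X (f k) x + (\<Sum>k\<in>A. c k * X (f k) x))"
    using insert.IH linop_smult[OF X, of "c k" "f k"] by simp
  finally show ?case using insert by simp
qed

lemma comm_funpow:
  assumes XW: "\<forall>b\<in>W. X b \<in> W" and YW: "\<forall>b\<in>W. Y b \<in> W" and XY: "\<forall>b\<in>W. X (Y b) = Y (X b)"
    and b: "b \<in> W"
  shows "(X ^^ k) b \<in> W \<and> Y ((X ^^ k) b) = (X ^^ k) (Y b)"
  using b
proof (induction k arbitrary: b)
  case 0 thus ?case by simp
next
  case (Suc k)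
  have "(X ^^ k) b \<in> W" using Suc by blast
  hence "(X ^^ Suc k) b \<in> W" using XW by simp
  moreover have "Y ((X ^^ Suc k) b) = X (Y ((X ^^ k) b))" using XY \<open>(X ^^ k) b \<in> W\<close> by simp
  moreover have "\<dots> = (X ^^ Suc k) (Y b)" using Suc by simp
  ultimately show ?case by simp
qed

lemma funpow_W:
  assumes YW: "\<forall>b\<in>W. Y b \<in> W" and b: "b \<in> W"
  shows "(Y ^^ k) b \<in> W"
  using b by (induction k) (auto simp: YW)

lemma pascal_sum:
  "(\<Sum>k\<le>n. of_nat (n choose k) * (g (Suc k) + g k)) = (\<Sum>k\<le>Suc n. of_nat (Suc n choose k) * (g k :: 'a::comm_semiring_1))"
proof -
  have A: "(\<Sum>k\<le>Suc n. of_nat (n choose k) * g k) = (\<Sum>k\<le>n. of_nat (n choose k) * g k)"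
    by (simp add: binomial_eq_0)
  have B: "(\<Sum>k\<le>Suc n. of_nat (n choose k) * g k) = g 0 + (\<Sum>k\<le>n. of_nat (n choose Suc k) * g (Suc k))"
    by (subst sum.atMost_Suc_shift) simp
  have "(\<Sum>k\<le>Suc n. of_nat (Suc n choose k) * g k) = g 0 + (\<Sum>k\<le>n. of_nat (Suc n choose Suc k) * g (Suc k))"
    by (subst sum.atMost_Suc_shift) simp
  also have "\<dots> = g 0 + (\<Sum>k\<le>n. of_nat (n choose k) * g (Suc k)) + (\<Sum>k\<le>n. of_nat (n choose Suc k) * g (Suc k))"
    by (simp add: sum.distrib distrib_right add_ac)
  also have "\<dots> = (\<Sum>k\<le>n. of_nat (n choose k) * g (Suc k)) + (\<Sum>k\<le>n. of_nat (n choose k) * g k)"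
    using A B by (simp add: add_ac)
  also have "\<dots> = (\<Sum>k\<le>n. of_nat (n choose k) * (g (Suc k) + g k))"
    by (simp add: sum.distrib distrib_left)
  finally show ?thesis by simp
qed

lemma op_binomial:
  assumes X: "linop X" and Y: "linop Y"
    and XW: "\<forall>b\<in>W. X b \<in> W" and YW: "\<forall>b\<in>W. Y b \<in> W" and XY: "\<forall>b\<in>W. X (Y b) = Y (X b)"
    and a: "a \<in> W"
  shows "((\<lambda>b x. X b x + Y b x) ^^ n) a = (\<lambda>x. \<Sum>k\<le>n. of_nat (n choose k) * (X ^^ k) ((Y ^^ (n - k)) a) x)"
proof (induction n)
  case 0 thus ?case by simp
next
  case (Suc n)
  let ?B = "\<lambda>m k. (X ^^ k) ((Y ^^ (m - k)) a)"
  have "((\<lambda>b x. X b x + Y b x) ^^ Suc n) a = (\<lambda>x. X (\<lambda>x. \<Sum>k\<le>n. of_nat (n choose k) * ?B n k x) x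
        + Y (\<lambda>x. \<Sum>k\<le>n. of_nat (n choose k) * ?B n k x) x)"
    using Suc by simp
  also have "\<dots> = (\<lambda>x. (\<Sum>k\<le>n. of_nat (n choose k) * X (?B n k) x) + (\<Sum>k\<le>n. of_nat (n choose k) * Y (?B n k) x))"
    using linop_sum[OF X, of "{..n}" "\<lambda>k. of_nat (n choose k)" "?B n"] linop_sum[OF Y, of "{..n}" "\<lambda>k. of_nat (n choose k)" "?B n"]
    by simp
  also have "\<dots> = (\<lambda>x. (\<Sum>k\<le>n. of_nat (n choose k) * ?B (Suc n) (Suc k) x) + (\<Sum>k\<le>n. of_nat (n choose k) * ?B (Suc n) k x))"
  proof -
    have e1: "X (?B n k) = ?B (Suc n) (Suc k)" for k by simp
    have e2: "Y (?B n k) = ?B (Suc n) k" if "k \<le> n" for k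
    proof -
      have "(Y ^^ (n - k)) a \<in> W" by (rule funpow_W[OF YW a])
      hence "Y (?B n k) = (X ^^ k) (Y ((Y ^^ (n - k)) a))" using comm_funpow[OF XW YW XY] by blast
      also have "\<dots> = ?B (Suc n) k" using that by (simp add: Suc_diff_le)
      finally show ?thesis .
    qed
    show ?thesis
    proof (rule ext)
      fix x
      have "(\<Sum>k\<le>n. of_nat (n choose k) * Y (?B n k) x) = (\<Sum>k\<le>n. of_nat (n choose k) * ?B (Suc n) k x)"
        by (rule sum.cong) (simp_all add: e2)
      thus "(\<Sum>k\<le>n. of_nat (n choose k) * X (?B n k) x) + (\<Sum>k\<le>n. of_nat (n choose k) * Y (?B n k) x)
         = (\<Sum>k\<le>n. of_nat (n choose k) * ?B (Suc n) (Suc k) x) + (\<Sum>k\<le>n. of_nat (n choose k) * ?B (Suc n) k x)"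
        by (simp only: e1)
    qed
  qed
  also have "\<dots> = (\<lambda>x. \<Sum>k\<le>Suc n. of_nat (Suc n choose k) * ?B (Suc n) k x)"
  proof (rule ext)
    fix x
    show "(\<Sum>k\<le>n. of_nat (n choose k) * ?B (Suc n) (Suc k) x) + (\<Sum>k\<le>n. of_nat (n choose k) * ?B (Suc n) k x)
       = (\<Sum>k\<le>Suc n. of_nat (Suc n choose k) * ?B (Suc n) k x)"
      using pascal_sum[of n "\<lambda>k. ?B (Suc n) k x"] by (simp only: sum.distrib distrib_left)
  qed
  finally show ?case .
qed

lemma choose_mid_sum:
  assumes p: "prime p" and ch: "CHAR('k::field) = p"
  shows "(\<Sum>k\<le>p. of_nat (p choose k) * (g k :: 'k)) = g 0 + g p"
proof -
  have p0: "p \<noteq> 0" using p by auto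
  have dec: "{..p} = insert 0 (insert p {0<..<p})" by auto
  have z: "(\<Sum>k\<in>{0<..<p}. of_nat (p choose k) * g k) = 0"
  proof (rule sum.neutral, rule ballI)
    fix k assume k: "k \<in> {0<..<p}"
    have "p dvd (p choose k)" using dvd_choose_prime[of k p] k p0 p by auto
    hence "(of_nat (p choose k) :: 'k) = 0" using ch by (simp add: of_nat_eq_0_iff_char_dvd)
    thus "of_nat (p choose k) * g k = 0" by simp
  qed
  have "(\<Sum>k\<le>p. of_nat (p choose k) * g k) = of_nat (p choose 0) * g 0 + (of_nat (p choose p) * g p + (\<Sum>k\<in>{0<..<p}. of_nat (p choose k) * g k))"
    unfolding dec using p0 by (simp add: sum.insert)
  thus ?thesis using z by simp
qed

lemma op_frob:
  assumes X: "linop X" and Y: "linop Y"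
    and XW: "\<forall>b\<in>W. X b \<in> W" and YW: "\<forall>b\<in>W. Y b \<in> W" and XY: "\<forall>b\<in>W. X (Y b) = Y (X b)"
    and a: "a \<in> W" and p: "prime p" and ch: "CHAR('k::field) = p"
  shows "((\<lambda>b x. X b x + Y b x) ^^ p) a = (\<lambda>x. (X ^^ p) a x + (Y ^^ p) a x :: 'k)"
proof (rule ext)
  fix x
  have "((\<lambda>b x. X b x + Y b x) ^^ p) a x = (\<Sum>k\<le>p. of_nat (p choose k) * (X ^^ k) ((Y ^^ (p - k)) a) x)"
    using op_binomial[OF X Y XW YW XY a] by simp
  also have "\<dots> = (Y ^^ p) a x + (X ^^ p) a x"
    using choose_mid_sum[OF p ch, of "\<lambda>k. (X ^^ k) ((Y ^^ (p - k)) a) x"] by simp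
  finally show "((\<lambda>b x. X b x + Y b x) ^^ p) a x = (X ^^ p) a x + (Y ^^ p) a x" by simp
qed

lemma sum_pow_char:
  assumes p: "prime p" and ch: "CHAR('k::field) = p" and fin: "finite B"
  shows "(\<Sum>y\<in>B. f y)^p = (\<Sum>y\<in>B. (f y :: 'k)^p)"
  using fin
proof (induction B rule: finite_induct)
  case empty thus ?case using p by (simp add: prime_gt_0_nat zero_power)
next
  case (insert z B)
  have "(f z + (\<Sum>y\<in>B. f y))^p = (\<Sum>k\<le>p. of_nat (p choose k) * (f z ^ k * (\<Sum>y\<in>B. f y) ^ (p - k)))"
    by (simp add: binomial_ring mult.assoc)
  also have "\<dots> = (\<Sum>y\<in>B. f y)^p + f z ^ p"
    using choose_mid_sum[OF p ch, of "\<lambda>k. f z ^ k * (\<Sum>y\<in>B. f y) ^ (p - k)"] by simp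
  finally show ?case using insert by simp
qed

lemma ker_pow_card:
  fixes f :: "('a \<Rightarrow> 'k::field) \<Rightarrow> ('a \<Rightarrow> 'k)"
  assumes finW: "finite W" and zW: "(\<lambda>x. 0) \<in> W" and fW: "\<forall>a\<in>W. f a \<in> W"
    and subW: "\<forall>a\<in>W. \<forall>b\<in>W. (\<lambda>x. a x - b x) \<in> W"
    and fsub: "\<forall>a\<in>W. \<forall>b\<in>W. f (\<lambda>x. a x - b x) = (\<lambda>x. f a x - f b x)"
  shows "card {a\<in>W. (f ^^ m) a = (\<lambda>x. 0)} \<le> card {a\<in>W. f a = (\<lambda>x. 0)} ^ m"
proof (induction m)
  case 0
  have "{a\<in>W. (f ^^ 0) a = (\<lambda>x. 0)} = {\<lambda>x. 0}" using zW by auto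
  thus ?case by simp
next
  case (Suc m)
  let ?K1 = "{a\<in>W. f a = (\<lambda>x. 0)}"
  let ?Km = "{a\<in>W. (f ^^ m) a = (\<lambda>x. 0)}"
  let ?Kn = "{a\<in>W. (f ^^ Suc m) a = (\<lambda>x. 0)}"
  have finK1: "finite ?K1" using finW by simp
  have finKn: "finite ?Kn" using finW by simp
  have finKm: "finite ?Km" using finW by simp
  have img: "f ` ?Kn \<subseteq> ?Km"
  proof
    fix b assume "b \<in> f ` ?Kn"
    then obtain a where a: "a \<in> ?Kn" "b = f a" by blast
    have "(f ^^ Suc m) a = (f ^^ m) (f a)" by (simp only: funpow_Suc_right o_apply)
    thus "b \<in> ?Km" using a fW by auto
  qed
  have fib: "card {a \<in> ?Kn. f a = b} \<le> card ?K1" for b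
  proof (cases "{a \<in> ?Kn. f a = b} = {}")
    case True thus ?thesis by (metis card.empty zero_le)
  next
    case False
    then obtain a0 where a0: "a0 \<in> ?Kn" "f a0 = b" by blast
    show ?thesis
    proof (rule card_inj_on_le[OF _ _ finK1])
      show "inj_on (\<lambda>a x. a x - a0 x) {a \<in> ?Kn. f a = b}"
      proof (rule inj_onI)
        fix a1 a2 assume "(\<lambda>x. a1 x - a0 x) = (\<lambda>x. a2 x - a0 x)"
        hence "\<And>x. a1 x - a0 x = a2 x - a0 x" by meson
        thus "a1 = a2" by (simp add: fun_eq_iff)
      qed
      show "(\<lambda>a x. a x - a0 x) ` {a \<in> ?Kn. f a = b} \<subseteq> ?K1"
      proof
        fix c assume "c \<in> (\<lambda>a x. a x - a0 x) ` {a \<in> ?Kn. f a = b}"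
        then obtain a where a: "a \<in> ?Kn" "f a = b" "c = (\<lambda>x. a x - a0 x)" by blast
        have "c \<in> W" using a a0 subW by auto
        moreover have "f c = (\<lambda>x. 0)" using a a0 fsub by auto
        ultimately show "c \<in> ?K1" by simp
      qed
    qed
  qed
  have eq: "?Kn = (\<Union>b\<in>f ` ?Kn. {a \<in> ?Kn. f a = b})" by blast
  have "card ?Kn = card (\<Union>b\<in>f ` ?Kn. {a \<in> ?Kn. f a = b})" using arg_cong[OF eq, of card] .
  also have "\<dots> \<le> (\<Sum>b\<in>f ` ?Kn. card {a \<in> ?Kn. f a = b})"
    by (rule card_UN_le) (rule finite_imageI[OF finKn])
  also have "\<dots> \<le> (\<Sum>b\<in>f ` ?Kn. card ?K1)" by (rule sum_mono) (rule fib)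
  also have "\<dots> = card (f ` ?Kn) * card ?K1" by simp
  also have "\<dots> \<le> card ?Km * card ?K1" using card_mono[OF finKm img] by simp
  also have "\<dots> \<le> card ?K1 ^ m * card ?K1" using Suc.IH by simp
  finally show ?case by (simp add: mult.commute)
qed




lemma (in group) cancel_l1: "x \<in> carrier G \<Longrightarrow> y \<in> carrier G \<Longrightarrow> x \<otimes> (inv x \<otimes> y) = y"
  by (simp add: m_assoc[symmetric])
lemma (in group) cancel_l2: "x \<in> carrier G \<Longrightarrow> y \<in> carrier G \<Longrightarrow> inv x \<otimes> (x \<otimes> y) = y"
  by (simp add: m_assoc[symmetric])

lemma (in group) comm_identity:
  assumes s: "s \<in> carrier G" and t: "t \<in> carrier G" and x: "x \<in> carrier G"
  shows "t \<otimes> (s \<otimes> x) = s \<otimes> (t \<otimes> x) \<otimes>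
     ((inv x \<otimes> inv t \<otimes> x) \<otimes> (inv x \<otimes> inv s \<otimes> x) \<otimes> inv (inv x \<otimes> inv t \<otimes> x) \<otimes> inv (inv x \<otimes> inv s \<otimes> x))"
  using s t x by (simp add: m_assoc inv_mult_group cancel_l1 cancel_l2)

lemma (in group) conj_pow:
  assumes x: "x \<in> carrier G" and w: "w \<in> carrier G"
  shows "(inv x \<otimes> w \<otimes> x) [^] (k::nat) = inv x \<otimes> w [^] k \<otimes> x"
proof (induction k)
  case 0 thus ?case using x by (simp add: m_assoc)
next
  case (Suc k)
  have "(inv x \<otimes> w \<otimes> x) [^] Suc k = (inv x \<otimes> w [^] k \<otimes> x) \<otimes> (inv x \<otimes> w \<otimes> x)"
    using Suc by (simp add: nat_pow_Suc)
  also have "\<dots> = inv x \<otimes> (w [^] k \<otimes> w) \<otimes> x" using x w by (simp add: m_assoc cancel_l1)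
  finally show ?case by (simp add: nat_pow_Suc)
qed

definition WN :: "('g, 'b) monoid_scheme \<Rightarrow> 'g set \<Rightarrow> ('g \<Rightarrow> 'k::field) set" where
  "WN G N = {a. (\<forall>x. x \<notin> carrier G \<longrightarrow> a x = 0) \<and> (\<forall>x\<in>carrier G. \<forall>n\<in>N. a (x \<otimes>\<^bsub>G\<^esub> n) = a x)}"

definition UB :: "('g, 'b) monoid_scheme \<Rightarrow> ('g \<Rightarrow> 'k::field) \<Rightarrow> 'g set \<Rightarrow> ('g \<Rightarrow> 'k) \<Rightarrow> ('g \<Rightarrow> 'k)" where
  "UB G v B a = (\<lambda>x. if x \<in> carrier G then \<Sum>y\<in>B. v y * a (inv\<^bsub>G\<^esub> y \<otimes>\<^bsub>G\<^esub> x) else 0)"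

definition ZZ :: "('g, 'b) monoid_scheme \<Rightarrow> ('g \<Rightarrow> 'k::field) \<Rightarrow> 'g \<Rightarrow> ('g \<Rightarrow> 'k) \<Rightarrow> ('g \<Rightarrow> 'k)" where
  "ZZ G v z a = (\<lambda>x. if x \<in> carrier G then v z * a (inv\<^bsub>G\<^esub> z \<otimes>\<^bsub>G\<^esub> x) else 0)"

lemma (in group) WN_comm:
  assumes comm: "\<forall>s\<in>carrier G. \<forall>t\<in>carrier G. s \<otimes> t \<otimes> inv s \<otimes> inv t \<in> N"
    and a: "a \<in> WN G N" and s: "s \<in> carrier G" and t: "t \<in> carrier G" and x: "x \<in> carrier G"
  shows "a (t \<otimes> (s \<otimes> x)) = a (s \<otimes> (t \<otimes> x))"
proof -
  let ?\<alpha> = "inv x \<otimes> inv t \<otimes> x" and ?\<beta> = "inv x \<otimes> inv s \<otimes> x"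
  have "?\<alpha> \<otimes> ?\<beta> \<otimes> inv ?\<alpha> \<otimes> inv ?\<beta> \<in> N" using comm s t x by simp
  moreover have "s \<otimes> (t \<otimes> x) \<in> carrier G" using s t x by simp
  ultimately have "a (s \<otimes> (t \<otimes> x) \<otimes> (?\<alpha> \<otimes> ?\<beta> \<otimes> inv ?\<alpha> \<otimes> inv ?\<beta>)) = a (s \<otimes> (t \<otimes> x))"
    using a unfolding WN_def by blast
  thus ?thesis using comm_identity[OF s t x] by simp
qed

lemma (in group) WN_pow:
  assumes ppow: "\<forall>t\<in>carrier G. t [^] p \<in> N"
    and a: "a \<in> WN G N" and z: "z \<in> carrier G" and x: "x \<in> carrier G"
  shows "a (inv (z [^] (p::nat)) \<otimes> x) = a x"
proof -
  have "(inv x \<otimes> inv z \<otimes> x) [^] p \<in> N" using ppow z x by simp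
  hence "a (x \<otimes> (inv x \<otimes> inv z \<otimes> x) [^] p) = a x" using a x unfolding WN_def by blast
  moreover have "x \<otimes> (inv x \<otimes> inv z \<otimes> x) [^] p = inv (z [^] p) \<otimes> x"
    using conj_pow[OF x, of "inv z" p] x z by (simp add: m_assoc cancel_l1 nat_pow_inv)
  ultimately show ?thesis by simp
qed

lemma (in group) ZZ_pow:
  assumes a0: "\<forall>x. x \<notin> carrier G \<longrightarrow> a x = 0" and z: "z \<in> carrier G"
  shows "(ZZ G v z ^^ k) a = (\<lambda>x. if x \<in> carrier G then v z ^ k * a (inv (z [^] k) \<otimes> x) else 0)"
proof (induction k)
  case 0 thus ?case using a0 by (auto simp: fun_eq_iff)
next
  case (Suc k)
  show ?case
  proof (rule ext)
    fix x
    show "(ZZ G v z ^^ Suc k) a x = (if x \<in> carrier G then v z ^ Suc k * a (inv (z [^] Suc k) \<otimes> x) else 0)"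
    proof (cases "x \<in> carrier G")
      case True
      have "(ZZ G v z ^^ Suc k) a x = ZZ G v z ((ZZ G v z ^^ k) a) x" by simp
      also have "\<dots> = v z * (ZZ G v z ^^ k) a (inv z \<otimes> x)"
        by (subst ZZ_def) (simp add: True)
      also have "\<dots> = v z * (v z ^ k * a (inv (z [^] k) \<otimes> (inv z \<otimes> x)))"
        using Suc True z by simp
      also have "\<dots> = v z ^ Suc k * a (inv (z [^] Suc k) \<otimes> x)"
      proof -
        have "inv (z [^] Suc k) = inv (z [^] k) \<otimes> inv z"
          using z by (simp only: nat_pow_Suc2[OF z] inv_mult_group nat_pow_closed)
        thus ?thesis using z True by (simp add: m_assoc)
      qed
      finally show ?thesis using True by simp
    qed (simp add: ZZ_def)
  qed
qed

lemma UB_linop: "linop (UB G v B)"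
  unfolding linop_def UB_def
  by (auto simp: fun_eq_iff distrib_left sum.distrib sum_distrib_left mult_ac)

lemma ZZ_linop: "linop (ZZ G v z)"
  unfolding linop_def ZZ_def
  by (auto simp: fun_eq_iff distrib_left mult_ac)

lemma (in group) UB_W:
  assumes N: "subgroup N G" and B: "B \<subseteq> carrier G" and a: "a \<in> WN G N"
  shows "UB G v B a \<in> WN G N"
proof -
  have "UB G v B a (x \<otimes> n) = UB G v B a x" if x: "x \<in> carrier G" and n: "n \<in> N" for x n
  proof -
    have nc: "n \<in> carrier G" using n subgroup.subset[OF N] by blast
    have "(\<Sum>y\<in>B. v y * a (inv y \<otimes> (x \<otimes> n))) = (\<Sum>y\<in>B. v y * a (inv y \<otimes> x))"
    proof (rule sum.cong[OF refl])
      fix y assume y: "y \<in> B"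
      hence yc: "y \<in> carrier G" using B by blast
      have "a (inv y \<otimes> x \<otimes> n) = a (inv y \<otimes> x)" using a yc x n unfolding WN_def by simp
      thus "v y * a (inv y \<otimes> (x \<otimes> n)) = v y * a (inv y \<otimes> x)" using yc x nc by (simp add: m_assoc)
    qed
    thus ?thesis using x nc unfolding UB_def by simp
  qed
  moreover have "\<forall>x. x \<notin> carrier G \<longrightarrow> UB G v B a x = 0" unfolding UB_def by simp
  ultimately show ?thesis unfolding WN_def by blast
qed

lemma (in group) ZZ_W:
  assumes N: "subgroup N G" and z: "z \<in> carrier G" and a: "a \<in> WN G N"
  shows "ZZ G v z a \<in> WN G N"
proof -
  have "ZZ G v z a = UB G v {z} a" by (simp add: UB_def ZZ_def fun_eq_iff)
  thus ?thesis using UB_W[OF N _ a, of "{z}" v] z by simp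
qed

lemma (in group) UB_ZZ_comm:
  assumes comm: "\<forall>s\<in>carrier G. \<forall>t\<in>carrier G. s \<otimes> t \<otimes> inv s \<otimes> inv t \<in> N"
    and B: "B \<subseteq> carrier G" and z: "z \<in> carrier G" and a: "a \<in> WN G N"
  shows "UB G v B (ZZ G v z a) = ZZ G v z (UB G v B a)"
proof (rule ext)
  fix x
  show "UB G v B (ZZ G v z a) x = ZZ G v z (UB G v B a) x"
  proof (cases "x \<in> carrier G")
    case True
    have "UB G v B (ZZ G v z a) x = (\<Sum>y\<in>B. v y * (v z * a (inv z \<otimes> (inv y \<otimes> x))))"
      using True B unfolding UB_def ZZ_def by (auto intro!: sum.cong)
    also have "\<dots> = (\<Sum>y\<in>B. v y * (v z * a (inv y \<otimes> (inv z \<otimes> x))))"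
      using WN_comm[OF comm a] B z True by (auto intro!: sum.cong)
    also have "\<dots> = ZZ G v z (UB G v B a) x"
      using True z unfolding UB_def ZZ_def by (simp add: sum_distrib_left mult_ac)
    finally show ?thesis .
  qed (simp add: UB_def ZZ_def)
qed

lemma (in group) UB_insert:
  assumes "finite B" "z \<notin> B"
  shows "UB G v (insert z B) = (\<lambda>b x. UB G v B b x + ZZ G v z b x)"
  using assms by (auto simp: fun_eq_iff UB_def ZZ_def)

lemma (in group) UB_pow:
  fixes v :: "'a \<Rightarrow> 'k::field"
  assumes p: "prime p" and ch: "CHAR('k) = p" and N: "subgroup N G"
    and comm: "\<forall>s\<in>carrier G. \<forall>t\<in>carrier G. s \<otimes> t \<otimes> inv s \<otimes> inv t \<in> N"
    and ppow: "\<forall>t\<in>carrier G. t [^] p \<in> N"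
    and fin: "finite B" and B: "B \<subseteq> carrier G"
  shows "\<forall>a\<in>WN G N. (UB G v B ^^ p) a = (\<lambda>x. (\<Sum>y\<in>B. v y ^ p) * a x)"
  using fin B
proof (induction B rule: finite_induct)
  case empty
  have p0: "p > 0" using p prime_gt_0_nat by blast
  then obtain q where q: "p = Suc q" using gr0_implies_Suc by blast
  have "UB G v {} = (\<lambda>b x. 0)" by (simp add: fun_eq_iff UB_def)
  hence "(UB G v {} ^^ p) a = (\<lambda>x. 0)" for a using q by simp
  thus ?case by simp
next
  case (insert z B)
  have B: "B \<subseteq> carrier G" and z: "z \<in> carrier G" using insert by auto
  show ?case
  proof
    fix a :: "'a \<Rightarrow> 'k" assume a: "a \<in> WN G N"
    have "(UB G v (insert z B) ^^ p) a = ((\<lambda>b x. UB G v B b x + ZZ G v z b x) ^^ p) a"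
      by (simp only: UB_insert[OF insert(1,2), of v])
    also have "\<dots> = (\<lambda>x. (UB G v B ^^ p) a x + (ZZ G v z ^^ p) a x)"
    proof (rule op_frob[OF UB_linop ZZ_linop _ _ _ a p ch])
      show "\<forall>b\<in>WN G N. UB G v B b \<in> WN G N" using UB_W[OF N B] by blast
      show "\<forall>b\<in>WN G N. ZZ G v z b \<in> WN G N" using ZZ_W[OF N z] by blast
      show "\<forall>b\<in>WN G N. UB G v B (ZZ G v z b) = ZZ G v z (UB G v B b)" using UB_ZZ_comm[OF comm B z] by blast
    qed
    also have "\<dots> = (\<lambda>x. (\<Sum>y\<in>insert z B. v y ^ p) * a x)"
    proof (rule ext)
      fix x
      have a0: "\<forall>x. x \<notin> carrier G \<longrightarrow> a x = 0" using a unfolding WN_def by blast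
      have "(ZZ G v z ^^ p) a x = v z ^ p * a x"
        using ZZ_pow[OF a0 z, where v=v and k=p] WN_pow[OF ppow a z] a0 by auto
      thus "(UB G v B ^^ p) a x + (ZZ G v z ^^ p) a x = (\<Sum>y\<in>insert z B. v y ^ p) * a x"
        using insert.IH B a insert(1,2) by (simp add: distrib_right)
    qed
    finally show "(UB G v (insert z B) ^^ p) a = (\<lambda>x. (\<Sum>y\<in>insert z B. v y ^ p) * a x)" .
  qed
qed

lemma group_algebra_finite:
  assumes "finite (carrier G)" and "finite (UNIV :: 'k set)"
  shows "finite (group_algebra G :: ('g \<Rightarrow> 'k::field) set)"
proof -
  have "group_algebra G = {f :: 'g \<Rightarrow> 'k. \<forall>x. (x \<in> carrier G \<longrightarrow> f x \<in> UNIV) \<and> (x \<notin> carrier G \<longrightarrow> f x = 0)}"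
    unfolding group_algebra_def by auto
  thus ?thesis using finite_set_of_finite_funs[OF assms] by simp
qed

lemma card_field_ge2: "finite (UNIV :: 'k::field set) \<Longrightarrow> 2 \<le> card (UNIV :: 'k set)"
proof -
  assume f: "finite (UNIV :: 'k set)"
  have "card {0::'k, 1} = 2" by simp
  moreover have "card {0::'k, 1} \<le> card (UNIV :: 'k set)" by (rule card_mono[OF f]) simp
  ultimately show ?thesis by simp
qed

lemma (in group) noncyclic_not_checkable:
  fixes v :: "'a \<Rightarrow> 'k::field"
  assumes finK: "finite (UNIV :: 'k set)" and p: "prime p" and ch: "CHAR('k) = p"
    and fin: "finite (carrier G)" and cG: "card (carrier G) = p^n" and nc: "\<not> cyclic_group G"
    and vKT: "v \<in> group_algebra G"
    and I: "{(\<lambda>x. c * ga_sum_elem G x) | c :: 'k. True} = {a \<in> group_algebra G. ga_mult G v a = (\<lambda>_. 0)}"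
  shows False
proof -
  obtain N where N: "subgroup N G" and comm: "\<forall>s\<in>carrier G. \<forall>t\<in>carrier G. s \<otimes> t \<otimes> inv s \<otimes> inv t \<in> N"
    and ppow: "\<forall>t\<in>carrier G. t [^] p \<in> N" and rN: "p < card (rcosets N)"
    using pgroup_noncyclic_sub[OF fin p cG nc] by blast
  have Nsub: "N \<subseteq> carrier G" using subgroup.subset[OF N] .
  let ?\<sigma> = "ga_sum_elem G :: 'a \<Rightarrow> 'k"
  have "(\<lambda>x. 1 * ?\<sigma> x) \<in> {(\<lambda>x. c * ga_sum_elem G x) | c :: 'k. True}" by blast
  hence "ga_mult G v (\<lambda>x. 1 * ?\<sigma> x) = (\<lambda>_. 0)" using I by blast
  hence "ga_mult G v (\<lambda>x. 1 * ?\<sigma> x) \<one> = 0" by simp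
  hence sv: "(\<Sum>y\<in>carrier G. v y) = 0"
    unfolding ga_mult_def ga_sum_elem_def by simp
  have gm: "ga_mult G v = UB G v (carrier G)"
    by (simp add: fun_eq_iff ga_mult_def UB_def)
  let ?W = "WN G N :: ('a \<Rightarrow> 'k) set"
  have WKT: "?W \<subseteq> group_algebra G" unfolding WN_def group_algebra_def by auto
  have finW: "finite ?W" using finite_subset[OF WKT group_algebra_finite[OF fin finK]] .
  have p0: "p > 0" using p prime_gt_0_nat by blast
  have pow0: "(ga_mult G v ^^ p) a = (\<lambda>x. 0)" if a: "a \<in> ?W" for a
  proof -
    have "(\<Sum>y\<in>carrier G. v y ^ p) = (\<Sum>y\<in>carrier G. v y) ^ p" using sum_pow_char[OF p ch fin] by simp
    also have "\<dots> = 0" using sv p0 by simp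
    finally show ?thesis using UB_pow[OF p ch N comm ppow fin subset_refl, of v] a gm by simp
  qed
  have zW: "(\<lambda>x. 0) \<in> ?W" unfolding WN_def by simp
  have fW: "\<forall>a\<in>?W. ga_mult G v a \<in> ?W" using UB_W[OF N subset_refl, where v=v] gm by auto
  have subW: "\<forall>a\<in>?W. \<forall>b\<in>?W. (\<lambda>x. a x - b x) \<in> ?W" unfolding WN_def by auto
  have fsub: "\<forall>a\<in>?W. \<forall>b\<in>?W. ga_mult G v (\<lambda>x. a x - b x) = (\<lambda>x. ga_mult G v a x - ga_mult G v b x)"
    by (auto simp: fun_eq_iff ga_mult_def right_diff_distrib sum_subtractf)
  have "card {a\<in>?W. (ga_mult G v ^^ p) a = (\<lambda>x. 0)} \<le> card {a\<in>?W. ga_mult G v a = (\<lambda>x. 0)} ^ p"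
    by (rule ker_pow_card[OF finW zW fW subW fsub])
  moreover have "{a\<in>?W. (ga_mult G v ^^ p) a = (\<lambda>x. 0)} = ?W" using pow0 by auto
  moreover have "card {a\<in>?W. ga_mult G v a = (\<lambda>x. 0)} \<le> card (UNIV :: 'k set)"
  proof -
    have "{a\<in>?W. ga_mult G v a = (\<lambda>x. 0)} \<subseteq> (\<lambda>c. \<lambda>x. c * ?\<sigma> x) ` UNIV"
      using I WKT by blast
    hence "card {a\<in>?W. ga_mult G v a = (\<lambda>x. 0)} \<le> card ((\<lambda>c. \<lambda>x. c * ?\<sigma> x) ` (UNIV :: 'k set))"
      by (rule card_mono[OF finite_imageI[OF finK]])
    also have "\<dots> \<le> card (UNIV :: 'k set)" by (rule card_image_le[OF finK])
    finally show ?thesis .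
  qed
  ultimately have up: "card ?W \<le> card (UNIV :: 'k set) ^ p"
    by (metis (no_types, lifting) le_trans power_mono zero_le)
  define F where "F = (\<lambda>f :: 'a set \<Rightarrow> 'k. \<lambda>x. if x \<in> carrier G then f (N #> inv x) else 0)"
  let ?P = "PiE (rcosets N) (\<lambda>_. UNIV :: 'k set)"
  have finR: "finite (rcosets N)" using fin by (simp add: RCOSETS_def)
  have FW: "F f \<in> ?W" for f
  proof -
    have "F f (x \<otimes> n) = F f x" if x: "x \<in> carrier G" and n: "n \<in> N" for x n
    proof -
      have nc: "n \<in> carrier G" using n Nsub by blast
      have "N #> inv (x \<otimes> n) = N #> (inv n \<otimes> inv x)" using x nc by (simp add: inv_mult_group)
      also have "\<dots> = (N #> inv n) #> inv x" using x nc Nsub by (simp add: coset_mult_assoc)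
      also have "N #> inv n = N" using coset_join2[OF _ N] subgroup.m_inv_closed[OF N n] nc by simp
      finally show ?thesis using x nc unfolding F_def by simp
    qed
    moreover have "\<forall>x. x \<notin> carrier G \<longrightarrow> F f x = 0" unfolding F_def by simp
    ultimately show ?thesis unfolding WN_def by blast
  qed
  have injF: "inj_on F ?P"
  proof (rule inj_onI)
    fix f1 f2 assume f1: "f1 \<in> ?P" and f2: "f2 \<in> ?P" and e: "F f1 = F f2"
    show "f1 = f2"
    proof (rule PiE_ext[OF f1 f2])
      fix R assume R: "R \<in> rcosets N"
      then obtain y where y: "y \<in> carrier G" "R = N #> y" by (rule rcosets_obtain)
      have "F f1 (inv y) = F f2 (inv y)" using e by simp
      thus "f1 R = f2 R" using y unfolding F_def by simp
    qed
  qed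
  have "card (UNIV :: 'k set) ^ card (rcosets N) = card ?P"
    using card_PiE[OF finR, of "\<lambda>_. UNIV :: 'k set"] by simp
  also have "\<dots> = card (F ` ?P)" using card_image[OF injF] by simp
  also have "\<dots> \<le> card ?W" by (rule card_mono[OF finW]) (use FW in blast)
  finally have low: "card (UNIV :: 'k set) ^ card (rcosets N) \<le> card ?W" .
  have q2: "1 < card (UNIV :: 'k set)" using card_field_ge2[OF finK] by simp
  have "card (UNIV :: 'k set) ^ p < card (UNIV :: 'k set) ^ card (rcosets N)"
    using power_strict_increasing[OF rN q2] .
  thus False using low up by simp
qed

lemma (in group) cyclic_checkable:
  assumes cyc: "cyclic_group G" and fin: "finite (carrier G)"
  shows "checkable G {(\<lambda>x. c * ga_sum_elem G x) | c :: 'k::field. True}"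
proof -
  obtain g where g: "g \<in> carrier G" and gen: "carrier G = range (\<lambda>n::int. g [^] n)"
    using cyc unfolding cyclic_group by blast
  define v :: "'a \<Rightarrow> 'k" where "v = (\<lambda>y. (if y = \<one> then 1 else 0) - (if y = g then 1 else 0))"
  have vKT: "v \<in> group_algebra G" unfolding group_algebra_def v_def using g by auto
  have mv: "ga_mult G v a x = a x - a (inv g \<otimes> x)" if x: "x \<in> carrier G" for a :: "'a \<Rightarrow> 'k" and x
  proof -
    have "(\<Sum>y\<in>carrier G. v y * a (inv y \<otimes> x)) =
       (\<Sum>y\<in>carrier G. (if y = \<one> then a (inv y \<otimes> x) else 0)) - (\<Sum>y\<in>carrier G. (if y = g then a (inv y \<otimes> x) else 0))"
    proof -
      have pw: "v y * a (inv y \<otimes> x) = (if y = \<one> then a (inv y \<otimes> x) else 0) - (if y = g then a (inv y \<otimes> x) else 0)" for y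
        by (cases "y = \<one>"; cases "y = g") (simp_all add: v_def)
      show ?thesis by (simp only: pw sum_subtractf)
    qed
    also have "\<dots> = a x - a (inv g \<otimes> x)" using fin g x by (simp add: sum.delta)
    finally show ?thesis using x unfolding ga_mult_def by simp
  qed
  let ?I = "{(\<lambda>x. c * ga_sum_elem G x) | c :: 'k. True}"
  have "?I = {a \<in> group_algebra G. ga_mult G v a = (\<lambda>_. 0)}"
  proof (intro equalityI subsetI)
    fix a assume "a \<in> ?I"
    then obtain c where c: "a = (\<lambda>x. c * ga_sum_elem G x)" by blast
    have "a \<in> group_algebra G" unfolding c group_algebra_def ga_sum_elem_def by simp
    moreover have "ga_mult G v a = (\<lambda>_. 0)"
    proof (rule ext)
      fix x show "ga_mult G v a x = 0"
      proof (cases "x \<in> carrier G")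
        case True thus ?thesis using mv[OF True] g unfolding c ga_sum_elem_def by simp
      qed (simp add: ga_mult_def)
    qed
    ultimately show "a \<in> {a \<in> group_algebra G. ga_mult G v a = (\<lambda>_. 0)}" by simp
  next
    fix a :: "'a \<Rightarrow> 'k" assume "a \<in> {a \<in> group_algebra G. ga_mult G v a = (\<lambda>_. 0)}"
    hence aKT: "a \<in> group_algebra G" and av: "ga_mult G v a = (\<lambda>_. 0)" by auto
    have a1: "a (g \<otimes> x) = a x" if x: "x \<in> carrier G" for x
    proof -
      have "ga_mult G v a (g \<otimes> x) = 0" using av by simp
      hence "a (g \<otimes> x) - a (inv g \<otimes> (g \<otimes> x)) = 0" using mv[of "g \<otimes> x" a] g x by simp
      thus ?thesis using g x by (simp add: cancel_l2)
    qed
    have an: "a (g [^] n \<otimes> x) = a x" if x: "x \<in> carrier G" for n :: nat and x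
      using x
    proof (induction n arbitrary: x)
      case 0 thus ?case by simp
    next
      case (Suc n)
      have "g [^] Suc n \<otimes> x = g [^] n \<otimes> (g \<otimes> x)" using g Suc.prems by (simp add: m_assoc)
      thus ?case using Suc.IH[of "g \<otimes> x"] a1[OF Suc.prems] g Suc.prems by simp
    qed
    have ai: "a (g [^] i) = a \<one>" for i :: int
    proof (cases "i < 0")
      case True
      let ?m = "nat (- i)"
      have "a (g [^] ?m \<otimes> (inv (g [^] ?m) \<otimes> \<one>)) = a (inv (g [^] ?m) \<otimes> \<one>)" by (rule an) (simp add: g)
      hence "a \<one> = a (inv (g [^] ?m))" using g by (simp add: cancel_l1)
      moreover have "g [^] i = inv (g [^] ?m)" by (subst int_pow_def2) (simp only: True if_True)
      ultimately show ?thesis by simp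
    next
      case False
      have "a (g [^] nat i \<otimes> \<one>) = a \<one>" using an by simp
      moreover have "g [^] i = g [^] nat i" by (subst int_pow_def2) (simp only: False if_False)
      ultimately show ?thesis using g by simp
    qed
    have "a = (\<lambda>x. a \<one> * ga_sum_elem G x)"
    proof (rule ext)
      fix x show "a x = a \<one> * ga_sum_elem G x"
      proof (cases "x \<in> carrier G")
        case True
        then obtain i :: int where "x = g [^] i" using gen by blast
        thus ?thesis using ai True unfolding ga_sum_elem_def by simp
      next
        case False thus ?thesis using aKT unfolding group_algebra_def ga_sum_elem_def by simp
      qed
    qed
    thus "a \<in> ?I" by blast
  qed
  thus ?thesis unfolding checkable_def using vKT by blast
qed

theorem mainTheorem7:
  fixes G :: "('g, 'b) monoid_scheme" and p :: nat
  assumes "finite (UNIV :: 'k::field set)"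
    and "prime p" and "CHAR('k) = p"
    and "group G" and "finite (carrier G)" and "\<exists>n. card (carrier G) = p ^ n"
  shows "checkable G {(\<lambda>x. c * ga_sum_elem G x) | c :: 'k. True} \<longleftrightarrow> cyclic_group G"
proof
  interpret group G by fact
  assume ch: "checkable G {(\<lambda>x. c * ga_sum_elem G x) | c :: 'k. True}"
  then obtain v :: "'g \<Rightarrow> 'k" where v: "v \<in> group_algebra G"
    and I: "{(\<lambda>x. c * ga_sum_elem G x) | c :: 'k. True} = {a \<in> group_algebra G. ga_mult G v a = (\<lambda>_. 0)}"
    unfolding checkable_def by blast
  obtain n where n: "card (carrier G) = p ^ n" using assms(6) by blast
  show "cyclic_group G"
  proof (rule ccontr)
    assume "\<not> cyclic_group G"
    thus False using noncyclic_not_checkable[OF assms(1,2,3,5) n _ v I] by blast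
  qed
next
  interpret group G by fact
  assume "cyclic_group G"
  thus "checkable G {(\<lambda>x. c * ga_sum_elem G x) | c :: 'k. True}" using cyclic_checkable assms(5) by blast
qed


end
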